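(* Let $\mathcal{G}=(\mathcal{V},\mathcal{E})$ be a DAG with treatment $A$ and outcome $Y$ as in the context, and let $\mathcal{G}'=\mathcal{G}\setminus(A\to Y)$. Let $P\subseteq\mathcal{P}$ be a set of precision variables, $Z\subseteq\mathcal{V}\setminus\{A,Y\}$, and $U\subseteq\mathcal{W}$ a set of extended confounding variables such that $Z\cup P\cup U$ is a $(Z\cup P)$-irreducible adjustment set for estimating $\tau$. Then in $\mathcal{G}'$: (i) $A\perp_{\mathcal{G}'}Y\mid Z\cup P\cup U$; (ii) $A\perp_{\mathcal{G}'}Y\mid Z\cup U$; hence $Z\cup P\cup U$ and $Z\cup U$ are valid adjustment sets. In $\mathcal{G}$: (a) $P\perp_{\mathcal{G}}A\mid Z$; (b) $P\perp_{\mathcal{G}}U\mid A\cup Z$. Moreover, if $S$ is a suboptimal precision variable and $P^*$ is a precision variable such that $S\perp_{\mathcal{G}'}Y\mid P^*\cup Z$ for all $Z\subseteq\mathcal{V}\setminus\{A,Y\}$, then (c) $S\perp_{\mathcal{G}}Y\mid Z\cup P^*$.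
   Context: $\mathcal{G}=(\mathcal{V},\mathcal{E})$ is a DAG containing treatment $A$ and outcome $Y$ with an edge $A\to Y$; variables follow a linear Gaussian SEM Markov and faithful to $\mathcal{G}$; no variable of $\mathcal{V}\setminus\{A,Y\}$ is a descendant of $A$. $\perp_{\mathcal{H}}$ denotes d-separation in graph $\mathcal{H}$. $\tau=\frac{\partial}{\partial a}E\{Y\mid do(A=a)\}$. A set $Z\subseteq\mathcal{V}\setminus\{A,Y\}$ is a valid adjustment set if the OLS estimator of the $A$-coefficient when regressing $Y$ on $A$ and $Z$ is unbiased for $\tau$ for every distribution Markov to $\mathcal{G}$ (equivalently here, $A\perp_{\mathcal{G}'}Y\mid Z$). For $K\subseteq Z$, a valid set $Z$ is $K$-irreducible if no proper subset $Z'\subsetneq Z$ with $K\subseteq Z'$ is valid. Precision variables $\mathcal{P}$: $V\in\mathcal{V}\setminus\{A,Y\}$ d-separated from $A$ in $\mathcal{G}'$ given every $K\subseteq\mathcal{V}\setminus\{A,Y\}$, and d-connected to $Y$ in $\mathcal{G}'$ given some $L\subseteq\mathcal{V}\setminus\{A,Y\}$. Suboptimal precision variables: $P\in\mathcal{P}$ for which there is another $P^*\in\mathcal{P}$ with all paths from $P$ to $Y$ in $\mathcal{G}'$ blocked given $P^*\cup Z$ for any $Z\subseteq\mathcal{V}\setminus\{A,Y\}$. Extended confounding variables $\mathcal{W}$: $V\in\mathcal{V}\setminus\{A,Y\}$ d-connected in $\mathcal{G}'$ to $A$ given some $K\subseteq\mathcal{V}\setminus\{A,Y\}$ and to $Y$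 given some $L\subseteq\mathcal{V}\setminus\{A,Y\}$. *)

theory Defs
  imports Main
begin

text \<open>Directed graphs are given by a vertex set V and an edge relation E;
  (u, w) \<in> E means u \<rightarrow> w.\<close>

definition is_dag :: "'v set \<Rightarrow> ('v \<times> 'v) set \<Rightarrow> bool" where
  "is_dag V E \<longleftrightarrow> finite V \<and> E \<subseteq> V \<times> V \<and> acyclic E"

definition descendants :: "('v \<times> 'v) set \<Rightarrow> 'v \<Rightarrow> 'v set" where
  "descendants E v = {w. (v, w) \<in> E\<^sup>*}"

definition is_path :: "('v \<times> 'v) set \<Rightarrow> 'v list \<Rightarrow> bool" where
  "is_path E p \<longleftrightarrow> p \<noteq> [] \<and> distinct p \<and>
     (\<forall>i. Suc i < length p \<longrightarrow> (p ! i, p ! Suc i) \<in> E \<or> (p ! Suc i, p ! i) \<in> E)"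

definition is_collider :: "('v \<times> 'v) set \<Rightarrow> 'v list \<Rightarrow> nat \<Rightarrow> bool" where
  "is_collider E p i \<longleftrightarrow> (p ! (i - 1), p ! i) \<in> E \<and> (p ! Suc i, p ! i) \<in> E"

definition d_open :: "('v \<times> 'v) set \<Rightarrow> 'v set \<Rightarrow> 'v list \<Rightarrow> bool" where
  "d_open E Z p \<longleftrightarrow> (\<forall>i. 0 < i \<and> Suc i < length p \<longrightarrow>
      (is_collider E p i \<longrightarrow> descendants E (p ! i) \<inter> Z \<noteq> {}) \<and>
      (\<not> is_collider E p i \<longrightarrow> p ! i \<notin> Z))"

text \<open>d-separation of X and Y given Z (convention: vertices of X, Y lying in Z
  are dropped, i.e. X \<perp> Y | Z iff X - Z and Y - Z are d-separated given Z).\<close>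
definition dsep :: "('v \<times> 'v) set \<Rightarrow> 'v set \<Rightarrow> 'v set \<Rightarrow> 'v set \<Rightarrow> bool" where
  "dsep E X Y Z \<longleftrightarrow> \<not> (\<exists>p. is_path E p \<and> hd p \<in> X - Z \<and> last p \<in> Y - Z \<and> d_open E Z p)"

definition Gprime :: "('v \<times> 'v) set \<Rightarrow> 'v \<Rightarrow> 'v \<Rightarrow> ('v \<times> 'v) set" where
  "Gprime E A Y = E - {(A, Y)}"

text \<open>Valid adjustment set (graphical characterization given in the context).\<close>
definition valid_adj :: "'v set \<Rightarrow> ('v \<times> 'v) set \<Rightarrow> 'v \<Rightarrow> 'v \<Rightarrow> 'v set \<Rightarrow> bool" where
  "valid_adj V E A Y Z \<longleftrightarrow> Z \<subseteq> V - {A, Y} \<and> dsep (Gprime E A Y) {A} {Y} Z"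

definition irreducible_adj :: "'v set \<Rightarrow> ('v \<times> 'v) set \<Rightarrow> 'v \<Rightarrow> 'v \<Rightarrow> 'v set \<Rightarrow> 'v set \<Rightarrow> bool" where
  "irreducible_adj V E A Y K Z \<longleftrightarrow> valid_adj V E A Y Z \<and> K \<subseteq> Z \<and>
     (\<forall>Z'. Z' \<subset> Z \<and> K \<subseteq> Z' \<longrightarrow> \<not> valid_adj V E A Y Z')"

definition precision_vars :: "'v set \<Rightarrow> ('v \<times> 'v) set \<Rightarrow> 'v \<Rightarrow> 'v \<Rightarrow> 'v set" where
  "precision_vars V E A Y = {v \<in> V - {A, Y}.
      (\<forall>K. K \<subseteq> V - {A, Y} \<longrightarrow> dsep (Gprime E A Y) {v} {A} K) \<and>
      (\<exists>L. L \<subseteq> V - {A, Y} \<and> \<not> dsep (Gprime E A Y) {v} {Y} L)}"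

definition suboptimal_precision_vars :: "'v set \<Rightarrow> ('v \<times> 'v) set \<Rightarrow> 'v \<Rightarrow> 'v \<Rightarrow> 'v set" where
  "suboptimal_precision_vars V E A Y = {p \<in> precision_vars V E A Y.
      \<exists>q \<in> precision_vars V E A Y. q \<noteq> p \<and>
        (\<forall>Z. Z \<subseteq> V - {A, Y} \<longrightarrow> dsep (Gprime E A Y) {p} {Y} ({q} \<union> Z))}"

definition ext_confounding_vars :: "'v set \<Rightarrow> ('v \<times> 'v) set \<Rightarrow> 'v \<Rightarrow> 'v \<Rightarrow> 'v set" where
  "ext_confounding_vars V E A Y = {v \<in> V - {A, Y}.
      (\<exists>K. K \<subseteq> V - {A, Y} \<and> \<not> dsep (Gprime E A Y) {v} {A} K) \<and>
      (\<exists>L. L \<subseteq> V - {A, Y} \<and> \<not> dsep (Gprime E A Y) {v} {Y} L)}"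

end

theory Submission
  imports Defs
begin
definition skel :: "('v \<times> 'v) set \<Rightarrow> 'v \<Rightarrow> ('v \<times> 'v) set" where
  "skel F Y = {(x,y). ((x,y) \<in> F \<or> (y,x) \<in> F) \<and> x \<noteq> Y \<and> y \<noteq> Y}"

lemma skel_sym: "(x,y) \<in> (skel F Y)\<^sup>* \<Longrightarrow> (y,x) \<in> (skel F Y)\<^sup>*"
proof -
  assume a: "(x,y) \<in> (skel F Y)\<^sup>*"
  have "sym (skel F Y)" unfolding sym_def skel_def by auto
  hence "sym ((skel F Y)\<^sup>*)" by (rule sym_rtrancl)
  thus ?thesis using a by (meson symD)
qed

lemma chain_rt:
  assumes "\<forall>j. j < i \<longrightarrow> (q!j, q!Suc j) \<in> R"
  shows "(q!0, q!i) \<in> R\<^sup>*"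
  using assms
proof (induction i)
  case 0 then show ?case by simp
next
  case (Suc i)
  then have "(q!0, q!i) \<in> R\<^sup>*" by simp
  moreover have "(q!i, q!Suc i) \<in> R" using Suc.prems by simp
  ultimately show ?case by (rule rtrancl_into_rtrancl)
qed

lemma distinct_chain:
  assumes "(x,y) \<in> R\<^sup>*"
  shows "\<exists>q. q \<noteq> [] \<and> distinct q \<and> hd q = x \<and> last q = y \<and>
     (\<forall>i. Suc i < length q \<longrightarrow> (q!i, q!Suc i) \<in> R)"
  using assms
proof (induction rule: converse_rtrancl_induct)
  case base
  show ?case by (rule exI[of _ "[y]"]) simp
next
  case (step x x')
  then obtain q where q: "q \<noteq> []" "distinct q" "hd q = x'" "last q = y"
     "\<forall>i. Suc i < length q \<longrightarrow> (q!i, q!Suc i) \<in> R" by blast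
  show ?case
  proof (cases "x \<in> set q")
    case True
    then obtain i where i: "i < length q" "q!i = x" by (metis in_set_conv_nth)
    show ?thesis
    proof (rule exI[of _ "drop i q"], intro conjI allI impI)
      show "drop i q \<noteq> []" using i by simp
      show "distinct (drop i q)" using q by simp
      show "hd (drop i q) = x" using i by (simp add: hd_drop_conv_nth)
      show "last (drop i q) = y" using i q by simp
      fix j assume "Suc j < length (drop i q)"
      then show "(drop i q ! j, drop i q ! Suc j) \<in> R" using q(5) i
        by (simp add: nth_drop)
    qed
  next
    case False
    show ?thesis
    proof (rule exI[of _ "x # q"], intro conjI allI impI)
      show "x # q \<noteq> []" by simp
      show "distinct (x # q)" using q False by simp
      show "hd (x # q) = x" by simp
      show "last (x # q) = y" using q by simp
      fix j assume j: "Suc j < length (x # q)"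
      show "((x # q) ! j, (x # q) ! Suc j) \<in> R"
      proof (cases j)
        case 0 then show ?thesis using q step(1) by (simp add: hd_conv_nth)
      next
        case (Suc k) then show ?thesis using q(5) j by simp
      qed
    qed
  qed
qed

lemma prec_conn:
  assumes EV: "E \<subseteq> V \<times> V"
    and p: "p \<in> precision_vars V E A Y"
    and c: "(p, A) \<in> (skel (Gprime E A Y) Y)\<^sup>*"
  shows False
proof -
  let ?G = "Gprime E A Y"
  have pV: "p \<in> V - {A,Y}" and pr: "\<And>K. K \<subseteq> V - {A,Y} \<Longrightarrow> dsep ?G {p} {A} K"
    using p unfolding precision_vars_def by auto
  obtain q where q: "q \<noteq> []" "distinct q" "hd q = p" "last q = A"
     "\<forall>i. Suc i < length q \<longrightarrow> (q!i, q!Suc i) \<in> skel ?G Y"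
    using distinct_chain[OF c] by blast
  define K where "K = {q!j | j. 0 < j \<and> Suc j < length q \<and> is_collider ?G q j}"
  have lastA: "q ! (length q - 1) = A" using q by (simp add: last_conv_nth)
  have GV: "?G \<subseteq> V \<times> V" using EV unfolding Gprime_def by auto
  have KV: "K \<subseteq> V - {A,Y}"
  proof
    fix v assume "v \<in> K"
    then obtain j where j: "v = q!j" "0 < j" "Suc j < length q" unfolding K_def by blast
    have "(q!(j-1), q!Suc (j-1)) \<in> skel ?G Y" using q(5)[rule_format, of "j-1"] j by simp
    hence "(q!(j-1), q!j) \<in> skel ?G Y" using j by simp
    hence "q!j \<noteq> Y" "q!j \<in> V" unfolding skel_def using GV by auto
    moreover have "q!j \<noteq> A"
    proof
      assume "q!j = A"
      hence "q!j = q!(length q - 1)" using lastA by simp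
      hence "j = length q - 1" using q(2) j by (simp add: nth_eq_iff_index_eq)
      thus False using j by simp
    qed
    ultimately show "v \<in> V - {A,Y}" using j by simp
  qed
  have "\<not> dsep ?G {p} {A} K"
    unfolding dsep_def
  proof (intro notI, elim notE, rule exI[of _ q], intro conjI)
    show "is_path ?G q" unfolding is_path_def using q unfolding skel_def by auto
    have pK: "p \<notin> K"
    proof
      assume "p \<in> K"
      then obtain j where j: "p = q!j" "0 < j" "Suc j < length q" unfolding K_def by blast
      have "q!0 = q!j" using j q by (simp add: hd_conv_nth)
      hence "0 = j" using q(2) j by (subst (asm) nth_eq_iff_index_eq) auto
      thus False using j by simp
    qed
    show "hd q \<in> {p} - K" using q pK by simp
    show "last q \<in> {A} - K" using q KV by auto
    show "d_open ?G K q" unfolding d_open_def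
    proof (intro allI impI)
      fix i assume i: "0 < i \<and> Suc i < length q"
      show "(is_collider ?G q i \<longrightarrow> descendants ?G (q ! i) \<inter> K \<noteq> {}) \<and>
          (\<not> is_collider ?G q i \<longrightarrow> q ! i \<notin> K)"
      proof
      show "is_collider ?G q i \<longrightarrow> descendants ?G (q ! i) \<inter> K \<noteq> {}"
      proof
        assume "is_collider ?G q i"
        hence "q!i \<in> K" unfolding K_def using i by blast
        moreover have "q!i \<in> descendants ?G (q!i)" unfolding descendants_def by simp
        ultimately show "descendants ?G (q ! i) \<inter> K \<noteq> {}" by blast
      qed
      show "\<not> is_collider ?G q i \<longrightarrow> q ! i \<notin> K"
      proof (intro impI notI)
        assume nc: "\<not> is_collider ?G q i" and "q!i \<in> K"
        then obtain j where j: "q!i = q!j" "0 < j" "Suc j < length q" "is_collider ?G q j"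
          unfolding K_def by blast
        hence "i = j" using q(2) i by (simp add: nth_eq_iff_index_eq)
        thus False using nc j by simp
      qed
      qed
    qed
  qed
  thus False using pr[OF KV] by simp
qed

lemma noY_internal:
  assumes noch: "\<And>w. (Y,w) \<notin> F"
    and pa: "is_path F q" and op: "d_open F K q" and YK: "Y \<notin> K"
    and i: "0 < i" "Suc i < length q"
  shows "q!i \<noteq> Y"
proof
  assume qi: "q!i = Y"
  have "(q!(i-1), q!Suc (i-1)) \<in> F \<or> (q!Suc (i-1), q!(i-1)) \<in> F"
    using pa i unfolding is_path_def by (auto dest: spec[of _ "i-1"])
  hence e1: "(q!(i-1), Y) \<in> F" using i qi noch by auto
  have "(q!i, q!Suc i) \<in> F \<or> (q!Suc i, q!i) \<in> F"
    using pa i unfolding is_path_def by simp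
  hence e2: "(q!Suc i, Y) \<in> F" using qi noch by auto
  have "is_collider F q i" unfolding is_collider_def using e1 e2 qi by simp
  hence "descendants F Y \<inter> K \<noteq> {}" using op i qi unfolding d_open_def by auto
  moreover have "descendants F Y = {Y}"
  proof -
    have "(Y,w) \<in> F\<^sup>* \<Longrightarrow> w = Y" for w
      by (erule converse_rtranclE) (auto simp: noch)
    thus ?thesis unfolding descendants_def by auto
  qed
  ultimately show False using YK by auto
qed

lemma path_conn:
  assumes "\<forall>i. Suc i < length q \<longrightarrow> (q!i, q!Suc i) \<in> F \<or> (q!Suc i, q!i) \<in> F"
    and "\<forall>x y. (x,y) \<in> F \<longrightarrow> x \<noteq> Y \<longrightarrow> y \<noteq> Y \<longrightarrow> (x,y) \<in> G"
    and "\<forall>i\<le>k. q!i \<noteq> Y" and "k < length q"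
  shows "(q!0, q!k) \<in> (skel G Y)\<^sup>*"
proof (rule chain_rt, intro allI impI)
  fix j assume j: "j < k"
  have "(q!j, q!Suc j) \<in> F \<or> (q!Suc j, q!j) \<in> F" using assms(1,4) j by simp
  moreover have "q!j \<noteq> Y" "q!Suc j \<noteq> Y" using assms(3) j by auto
  ultimately show "(q!j, q!Suc j) \<in> skel G Y" using assms(2) unfolding skel_def by auto
qed

lemma nth_neq_last:
  assumes "distinct q" "j < length q - 1"
  shows "q!j \<noteq> last q"
proof
  assume "q!j = last q"
  moreover have "q \<noteq> []" using assms by auto
  ultimately have "q!j = q!(length q - 1)" by (simp add: last_conv_nth)
  hence "j = length q - 1" using assms by (subst (asm) nth_eq_iff_index_eq) auto
  thus False using assms by simp
qed

lemma rt_avoid: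
  assumes "(c,z) \<in> E\<^sup>*" "z \<noteq> Y" "\<And>w. (Y,w) \<notin> E"
  shows "(c,z) \<in> (E - {(A,Y)})\<^sup>*"
  using assms(1,2)
proof (induction rule: rtrancl_induct)
  case base then show ?case by simp
next
  case (step w z)
  have "w \<noteq> Y" using step(2) assms(3) by blast
  hence "(c,w) \<in> (E - {(A,Y)})\<^sup>*" using step by simp
  moreover have "(w,z) \<in> E - {(A,Y)}" using step by simp
  ultimately show ?case by (rule rtrancl_into_rtrancl)
qed

lemma all_noY:
  assumes noch: "\<And>w. (Y,w) \<notin> F"
    and pa: "is_path F q" and op: "d_open F K q" and YK: "Y \<notin> K"
    and h: "hd q \<noteq> Y" and l: "last q \<noteq> Y"
  shows "\<forall>j\<le>length q - 1. q!j \<noteq> Y"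
proof (intro allI impI)
  have qne: "q \<noteq> []" using pa unfolding is_path_def by auto
  fix j assume j: "j \<le> length q - 1"
  show "q!j \<noteq> Y"
  proof (cases "j = 0")
    case True thus ?thesis using h qne by (auto simp: hd_conv_nth)
  next
    case False
    show ?thesis
    proof (cases "j = length q - 1")
      case True thus ?thesis using l qne by (auto simp: last_conv_nth)
    next
      case False
      have "0 < j" "Suc j < length q" using False \<open>j \<noteq> 0\<close> j by auto
      thus ?thesis using noY_internal[OF noch pa op YK] by blast
    qed
  qed
qed

theorem lemmaB4:
  fixes V :: "'v set" and E :: "('v \<times> 'v) set" and A Y :: 'v
    and P Z U :: "'v set"
  assumes dag: "is_dag V E"
    and AY: "A \<in> V" "Y \<in> V" "(A, Y) \<in> E"
    and nodesc: "\<forall>v \<in> V - {A, Y}. v \<notin> descendants E A"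
    and P: "P \<subseteq> precision_vars V E A Y"
    and Z: "Z \<subseteq> V - {A, Y}"
    and U: "U \<subseteq> ext_confounding_vars V E A Y"
    and irr: "irreducible_adj V E A Y (Z \<union> P) (Z \<union> P \<union> U)"
  shows "dsep (Gprime E A Y) {A} {Y} (Z \<union> P \<union> U)
       \<and> dsep (Gprime E A Y) {A} {Y} (Z \<union> U)
       \<and> valid_adj V E A Y (Z \<union> P \<union> U)
       \<and> valid_adj V E A Y (Z \<union> U)
       \<and> dsep E P {A} Z
       \<and> dsep E P U ({A} \<union> Z)
       \<and> (\<forall>S Pstar. S \<in> suboptimal_precision_vars V E A Y
              \<and> Pstar \<in> precision_vars V E A Y
              \<and> (\<forall>Z'. Z' \<subseteq> V - {A, Y} \<longrightarrow> dsep (Gprime E A Y) {S} {Y} ({Pstar} \<union> Z'))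
            \<longrightarrow> dsep E {S} {Y} (Z \<union> {Pstar}))"
proof -
  let ?G = "Gprime E A Y"
  have G_def: "?G = E - {(A,Y)}" unfolding Gprime_def by simp
  have EV: "E \<subseteq> V \<times> V" and acy: "acyclic E" using dag unfolding is_dag_def by auto
  have AneY: "A \<noteq> Y" using AY(3) acy unfolding acyclic_def by auto
  have noY: "\<And>w. (Y,w) \<notin> E"
  proof
    fix w assume e: "(Y,w) \<in> E"
    hence wV: "w \<in> V" using EV by auto
    have "(A,w) \<in> E\<^sup>*" using AY(3) e by simp
    hence "w \<in> descendants E A" unfolding descendants_def by simp
    hence "w = A \<or> w = Y" using nodesc wV by blast
    moreover have "w \<noteq> Y" using e acy unfolding acyclic_def by auto
    moreover have "w \<noteq> A"
    proof
      assume "w = A"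
      hence "(A,A) \<in> E\<^sup>+" using AY(3) e by auto
      thus False using acy unfolding acyclic_def by auto
    qed
    ultimately show False by simp
  qed
  have noYG: "\<And>w. (Y,w) \<notin> ?G" using noY unfolding G_def by auto
  have EG: "\<forall>x y. (x,y) \<in> E \<longrightarrow> x \<noteq> Y \<longrightarrow> y \<noteq> Y \<longrightarrow> (x,y) \<in> ?G"
    unfolding G_def by auto
  have GG: "\<forall>x y. (x,y) \<in> ?G \<longrightarrow> x \<noteq> Y \<longrightarrow> y \<noteq> Y \<longrightarrow> (x,y) \<in> ?G" by auto
  have precV: "precision_vars V E A Y \<subseteq> V - {A,Y}" unfolding precision_vars_def by auto
  have extV: "ext_confounding_vars V E A Y \<subseteq> V - {A,Y}" unfolding ext_confounding_vars_def by auto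
  have PV: "P \<subseteq> V - {A,Y}" using P precV by auto
  have UV: "U \<subseteq> V - {A,Y}" using U extV by auto
  have d1: "dsep ?G {A} {Y} (Z \<union> P \<union> U)" and v1: "valid_adj V E A Y (Z \<union> P \<union> U)"
    using irr unfolding irreducible_adj_def valid_adj_def by auto
  have d2: "dsep ?G {A} {Y} (Z \<union> U)"
    unfolding dsep_def
  proof
    assume "\<exists>p. is_path ?G p \<and> hd p \<in> {A} - (Z \<union> U) \<and> last p \<in> {Y} - (Z \<union> U) \<and> d_open ?G (Z \<union> U) p"
    then obtain q where q: "is_path ?G q" "hd q \<in> {A} - (Z \<union> U)" "last q \<in> {Y} - (Z \<union> U)"
      "d_open ?G (Z \<union> U) q" by blast
    have qne: "q \<noteq> []" and dq: "distinct q" using q(1) unfolding is_path_def by auto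
    show False
    proof (cases "\<exists>i. 0 < i \<and> Suc i < length q \<and> \<not> is_collider ?G q i \<and> q!i \<in> P")
      case True
      then obtain i where i: "0 < i" "Suc i < length q" "q!i \<in> P" by blast
      have "\<forall>j\<le>i. q!j \<noteq> Y"
      proof (intro allI impI)
        fix j assume "j \<le> i"
        hence "q!j \<noteq> last q" using nth_neq_last[OF dq] i by simp
        thus "q!j \<noteq> Y" using q(3) by simp
      qed
      hence "(q!0, q!i) \<in> (skel ?G Y)\<^sup>*"
        using path_conn[OF _ GG, of q i] q(1) i unfolding is_path_def by simp
      moreover have "q!0 = A" using q(2) qne by (simp add: hd_conv_nth)
      ultimately have "(q!i, A) \<in> (skel ?G Y)\<^sup>*" using skel_sym by metis
      thus False using prec_conn[OF EV] P i(3) by blast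
    next
      case False
      have "d_open ?G (Z \<union> P \<union> U) q"
        using q(4) False unfolding d_open_def by blast
      moreover have "hd q \<in> {A} - (Z \<union> P \<union> U)" "last q \<in> {Y} - (Z \<union> P \<union> U)"
        using q(2,3) PV by auto
      ultimately show False using d1 q(1) unfolding dsep_def by blast
    qed
  qed
  have v2: "valid_adj V E A Y (Z \<union> U)" unfolding valid_adj_def using d2 Z UV by auto
  have da: "dsep E P {A} Z"
    unfolding dsep_def
  proof
    assume "\<exists>p. is_path E p \<and> hd p \<in> P - Z \<and> last p \<in> {A} - Z \<and> d_open E Z p"
    then obtain q where q: "is_path E q" "hd q \<in> P - Z" "last q \<in> {A} - Z" "d_open E Z q" by blast
    have qne: "q \<noteq> []" and dq: "distinct q" using q(1) unfolding is_path_def by auto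
    have "\<forall>j\<le>length q - 1. q!j \<noteq> Y"
    proof (intro allI impI)
      fix j assume j: "j \<le> length q - 1"
      show "q!j \<noteq> Y"
      proof (cases "j = 0")
        case True thus ?thesis using q(2) PV qne by (auto simp: hd_conv_nth)
      next
        case False
        show ?thesis
        proof (cases "j = length q - 1")
          case True thus ?thesis using q(3) AneY qne by (auto simp: last_conv_nth)
        next
          case False
          have "Y \<notin> Z" using Z by auto
          moreover have "0 < j" "Suc j < length q" using False \<open>j \<noteq> 0\<close> j by auto
          ultimately show ?thesis using noY_internal[OF noY q(1) q(4)] by blast
        qed
      qed
    qed
    hence "(q!0, q!(length q - 1)) \<in> (skel ?G Y)\<^sup>*"
      using path_conn[OF _ EG, of q "length q - 1"] q(1) qne unfolding is_path_def by simp
    hence "(hd q, A) \<in> (skel ?G Y)\<^sup>*" using q(3) qne by (simp add: hd_conv_nth last_conv_nth)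
    thus False using prec_conn[OF EV] P q(2) by blast
  qed
  have db: "dsep E P U ({A} \<union> Z)"
    unfolding dsep_def
  proof
    assume "\<exists>p. is_path E p \<and> hd p \<in> P - ({A} \<union> Z) \<and> last p \<in> U - ({A} \<union> Z) \<and> d_open E ({A} \<union> Z) p"
    then obtain q where q: "is_path E q" "hd q \<in> P - ({A} \<union> Z)" "last q \<in> U - ({A} \<union> Z)"
      "d_open E ({A} \<union> Z) q" by blast
    have qne: "q \<noteq> []" using q(1) unfolding is_path_def by auto
    have "Y \<notin> {A} \<union> Z" using Z AneY by auto
    hence "\<forall>j\<le>length q - 1. q!j \<noteq> Y"
      using all_noY[OF noY q(1) q(4)] q(2,3) PV UV by auto
    hence "(q!0, q!(length q - 1)) \<in> (skel ?G Y)\<^sup>*"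
      using path_conn[OF _ EG, of q "length q - 1"] q(1) qne unfolding is_path_def by simp
    hence c1: "(hd q, last q) \<in> (skel ?G Y)\<^sup>*" using qne by (simp add: hd_conv_nth last_conv_nth)
    have "last q \<in> ext_confounding_vars V E A Y" using q(3) U by auto
    then obtain K where K: "K \<subseteq> V - {A,Y}" "\<not> dsep ?G {last q} {A} K"
      unfolding ext_confounding_vars_def by blast
    then obtain r where r: "is_path ?G r" "hd r \<in> {last q} - K" "last r \<in> {A} - K" "d_open ?G K r"
      unfolding dsep_def by blast
    have rne: "r \<noteq> []" using r(1) unfolding is_path_def by auto
    have "Y \<notin> K" using K by auto
    hence "\<forall>j\<le>length r - 1. r!j \<noteq> Y"
      using all_noY[OF noYG r(1) r(4)] r(2,3) q(3) UV AneY by auto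
    hence "(r!0, r!(length r - 1)) \<in> (skel ?G Y)\<^sup>*"
      using path_conn[OF _ GG, of r "length r - 1"] r(1) rne unfolding is_path_def by simp
    hence "(last q, A) \<in> (skel ?G Y)\<^sup>*" using rne r(2,3) by (simp add: hd_conv_nth last_conv_nth)
    with c1 have "(hd q, A) \<in> (skel ?G Y)\<^sup>*" by simp
    thus False using prec_conn[OF EV] P q(2) by blast
  qed
  have dc: "\<forall>S Pstar. S \<in> suboptimal_precision_vars V E A Y
              \<and> Pstar \<in> precision_vars V E A Y
              \<and> (\<forall>Z'. Z' \<subseteq> V - {A, Y} \<longrightarrow> dsep (Gprime E A Y) {S} {Y} ({Pstar} \<union> Z'))
            \<longrightarrow> dsep E {S} {Y} (Z \<union> {Pstar})"
  proof (intro allI impI)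
    fix S Pstar assume as: "S \<in> suboptimal_precision_vars V E A Y
              \<and> Pstar \<in> precision_vars V E A Y
              \<and> (\<forall>Z'. Z' \<subseteq> V - {A, Y} \<longrightarrow> dsep (Gprime E A Y) {S} {Y} ({Pstar} \<union> Z'))"
    have Sp: "S \<in> precision_vars V E A Y" using as unfolding suboptimal_precision_vars_def by auto
    have PsV: "Pstar \<in> V - {A,Y}" using as precV by auto
    have hyp: "dsep ?G {S} {Y} (Z \<union> {Pstar})" using as Z by (metis Un_commute)
    show "dsep E {S} {Y} (Z \<union> {Pstar})"
      unfolding dsep_def
    proof
      assume "\<exists>p. is_path E p \<and> hd p \<in> {S} - (Z \<union> {Pstar}) \<and> last p \<in> {Y} - (Z \<union> {Pstar}) \<and> d_open E (Z \<union> {Pstar}) p"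
      then obtain q where q: "is_path E q" "hd q \<in> {S} - (Z \<union> {Pstar})" "last q \<in> {Y} - (Z \<union> {Pstar})"
        "d_open E (Z \<union> {Pstar}) q" by blast
      have qne: "q \<noteq> []" and dq: "distinct q" using q(1) unfolding is_path_def by auto
      have SY: "S \<noteq> Y" using Sp precV by auto
      have n2: "2 \<le> length q"
      proof (rule ccontr)
        assume "\<not> 2 \<le> length q"
        hence "length q = 1" using qne by (cases q) (auto simp: not_le)
        hence "hd q = last q" using qne by (simp add: hd_conv_nth last_conv_nth)
        thus False using q(2,3) SY by simp
      qed
      have ltY: "\<And>j. j < length q - 1 \<Longrightarrow> q!j \<noteq> Y"
        using nth_neq_last[OF dq] q(3) by auto
      have lastY: "q!(length q - 1) = Y" using q(3) qne by (simp add: last_conv_nth)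
      show False
      proof (cases "q!(length q - 2) = A")
        case True
        have "\<forall>j\<le>length q - 2. q!j \<noteq> Y" using ltY n2 by auto
        hence "(q!0, q!(length q - 2)) \<in> (skel ?G Y)\<^sup>*"
          using path_conn[OF _ EG, of q "length q - 2"] q(1) n2 unfolding is_path_def by simp
        hence "(S, A) \<in> (skel ?G Y)\<^sup>*" using True q(2) qne by (simp add: hd_conv_nth)
        thus False using prec_conn[OF EV Sp] by blast
      next
        case False
        have edge: "(q!i, q!Suc i) \<in> ?G \<or> (q!Suc i, q!i) \<in> ?G" if i: "Suc i < length q" for i
        proof -
          have e: "(q!i, q!Suc i) \<in> E \<or> (q!Suc i, q!i) \<in> E" using q(1) i unfolding is_path_def by blast
          have "q!i \<noteq> Y" using ltY i by auto
          moreover have "q!Suc i = Y \<Longrightarrow> q!i \<noteq> A"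
          proof -
            assume "q!Suc i = Y"
            hence "q!Suc i = q!(length q - 1)" using lastY by simp
            hence "Suc i = length q - 1" using dq i by (subst (asm) nth_eq_iff_index_eq) auto
            hence "i = length q - 2" by simp
            thus "q!i \<noteq> A" using False by simp
          qed
          ultimately show ?thesis using e unfolding G_def by auto
        qed
        have pG: "is_path ?G q" using q(1) edge unfolding is_path_def by auto
        have oG: "d_open ?G (Z \<union> {Pstar}) q"
          unfolding d_open_def
        proof (intro allI impI)
          fix i assume i: "0 < i \<and> Suc i < length q"
          have qiY: "q!i \<noteq> Y" using ltY[of i] i by linarith
          have colEq: "is_collider ?G q i \<longleftrightarrow> is_collider E q i"
            unfolding is_collider_def G_def using qiY by auto
          have desc: "descendants E (q!i) \<inter> (Z \<union> {Pstar}) \<noteq> {} \<Longrightarrow>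
                descendants ?G (q!i) \<inter> (Z \<union> {Pstar}) \<noteq> {}"
          proof -
            assume "descendants E (q!i) \<inter> (Z \<union> {Pstar}) \<noteq> {}"
            then obtain z where z: "(q!i, z) \<in> E\<^sup>*" "z \<in> Z \<union> {Pstar}" unfolding descendants_def by blast
            have "z \<noteq> Y" using z(2) Z PsV by auto
            hence "(q!i, z) \<in> ?G\<^sup>*" using rt_avoid[OF z(1) _ noY] unfolding G_def by blast
            thus ?thesis using z(2) unfolding descendants_def by blast
          qed
          show "(is_collider ?G q i \<longrightarrow> descendants ?G (q ! i) \<inter> (Z \<union> {Pstar}) \<noteq> {}) \<and>
              (\<not> is_collider ?G q i \<longrightarrow> q ! i \<notin> Z \<union> {Pstar})"
            using q(4) i colEq desc unfolding d_open_def by blast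
        qed
        show False using hyp pG oG q(2,3) unfolding dsep_def by blast
      qed
    qed
  qed
  show ?thesis using d1 d2 v1 v2 da db dc by blast
qed

end
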